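(* Let $S$ be as in the context and $1\le k<n$. Let $p_1,\dots,p_r$ be pairwise node-disjoint sequences $p_l=(x_{l,1},\dots,x_{l,w_l})$, $w_l\ge2$, of pairwise distinct nodes of $G_k(S)$ such that for every $1\le t<w_l$, $x_{l,t+1}$ is the only successor of $x_{l,t}$ and $x_{l,t}$ is the only predecessor of $x_{l,t+1}$, and suppose that every fusible edge of $G_k(S)$ is of the form $(x_{l,t},x_{l,t+1})$ for some $l$ and $t$. Let $[i_l,j_l]$ be the $x_{l,w_l}$-interval, so that $\langle w_l-1,[i_l,j_l]\rangle$ is a prefix interval. Let $L'$ be the string obtained from $L$ by deleting every entry at a position of the form $\mathrm{LF}^t[y]$ with $1\le l\le r$, $i_l<y\le j_l$ and $0\le t<w_l-1$ (i.e. the $L$-component of the tunneled BWT obtained by tunneling these prefix intervals). Then $|L'|=m_k$, the number of edges of the edge-reduced de Bruijn graph $\tilde G_k(S)$ counted with multiplicity.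
   Context: $\Sigma$ is a finite totally ordered alphabet containing a symbol $\$$ smaller than every other symbol. $S$ is a string of length $n\ge 2$ over $\Sigma$ whose last character is $\$$ and in which $\$$ occurs nowhere else; strings are indexed from $1$. The rotations of $S$ are the $n$ strings $S[i..n]S[1..i-1]$, $i\in[1,n]$. For $1\le k\le n$ let $Z_k(S)=S[1..n]S[1..k]$. The order-$k$ de Bruijn graph $G_k(S)$ is the directed multigraph with node set $\{Z_k(S)[i..i+k-1]: i\in[1,n]\}$ that, for every $z\in\Sigma^{k+1}$ occurring exactly $m\ge1$ times as a substring of $Z_k(S)$, contains the edge $(z[1..k],z[2..k+1])$ with multiplicity $m$. $x$ is a predecessor of $y$ (and $y$ a successor of $x$) if there is an edge $(x,y)$ of positive multiplicity. An edge $(x,y)$ is fusible if $y$ is the only successor of $x$ and $x$ is the only predecessor of $y$. The edge-reduced de Bruijn graph $\tilde G_k(S)$ is obtained from $G_k(S)$ by setting the multiplicity of every fusible edge to $1$. Let $M$ be the $n\times n$ matrix whose rows (indexed $1,\dots,n$) are the rotations of $S$ sorted lexicographically, and let $L[i]$ be the last character of row $i$ (the BWT of $S$). For $c\in\Sigma$, $C[c]$ is the number of characters of $S$ strictly smaller than $c$, and $\mathrm{rank}_c(L,i)$ is the number of occurrences of $c$ in $L[1..i]$. The LF-mapping is $\mathrm{LF}[i]=C[L[i]]+\mathrm{rank}_{L[i]}(L,i)$, a permutation of $[1,n]$; $\mathrm{LF}^t$ is its $t$-fold iterate ($\mathrm{LF}^0$ the identity) and $\mathrm{LF}^{-1}$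 its inverse. For a string $x$ that is a prefix of some rotation, the $x$-interval is the set of indices of rows of $M$ that begin with $x$ (an interval $[i,j]$). A prefix interval $\langle w,[i,j]\rangle$ consists of an integer $w\ge0$ and an interval $[i,j]\subseteq[1,n]$ such that for every integer $t$ with $-1\le t<w$ the characters $L[\mathrm{LF}^t[i]],\dots,L[\mathrm{LF}^t[j]]$ are all equal. *)

theory Defs
  imports Main "HOL-Library.List_Lexorder"
begin

(* Conventions: strings are Isabelle lists, hence indexed from 0 (paper position i
   corresponds to list index i-1; row i of M corresponds to index i-1). *)

definition rot :: "'a list \<Rightarrow> nat \<Rightarrow> 'a list" where
  "rot S i = drop i S @ take i S"

definition BWM :: "'a::linorder list \<Rightarrow> 'a list list" where
  "BWM S = sort (map (rot S) [0..<length S])"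

definition BWT :: "'a::linorder list \<Rightarrow> nat \<Rightarrow> 'a" where
  "BWT S i = last (BWM S ! i)"

definition Ccount :: "'a::linorder list \<Rightarrow> 'a \<Rightarrow> nat" where
  "Ccount S c = length (filter (\<lambda>x. x < c) S)"

definition rankL :: "'a::linorder list \<Rightarrow> 'a \<Rightarrow> nat \<Rightarrow> nat" where
  "rankL S c i = length (filter (\<lambda>x. x = c) (take (Suc i) (map (BWT S) [0..<length S])))"

definition LF :: "'a::linorder list \<Rightarrow> nat \<Rightarrow> nat" where
  "LF S i = Ccount S (BWT S i) + rankL S (BWT S i) i - 1"

definition xint :: "'a::linorder list \<Rightarrow> 'a list \<Rightarrow> nat set" where
  "xint S x = {i. i < length S \<and> take (length x) (BWM S ! i) = x}"

definition Zk :: "'a list \<Rightarrow> nat \<Rightarrow> 'a list" where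
  "Zk S k = S @ take k S"

definition occ :: "'a list \<Rightarrow> nat \<Rightarrow> 'a list \<Rightarrow> nat" where
  "occ S k z = card {i. i + length z \<le> length (Zk S k) \<and> take (length z) (drop i (Zk S k)) = z}"

definition dbg_nodes :: "'a list \<Rightarrow> nat \<Rightarrow> 'a list set" where
  "dbg_nodes S k = {take k (drop i (Zk S k)) | i. i < length S}"

(* edges of G_k(S) are identified with the (k+1)-substrings z of Z_k(S);
   z gives the edge (z[1..k], z[2..k+1]) with multiplicity occ S k z *)
definition dbg_edges :: "'a list \<Rightarrow> nat \<Rightarrow> 'a list set" where
  "dbg_edges S k = {z. length z = Suc k \<and> occ S k z \<ge> 1}"

definition is_edge :: "'a list \<Rightarrow> nat \<Rightarrow> 'a list \<Rightarrow> 'a list \<Rightarrow> bool" where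
  "is_edge S k x y = (\<exists>z\<in>dbg_edges S k. take k z = x \<and> drop 1 z = y)"

definition fusible :: "'a list \<Rightarrow> nat \<Rightarrow> 'a list \<Rightarrow> bool" where
  "fusible S k z = (z \<in> dbg_edges S k
     \<and> (\<forall>y. is_edge S k (take k z) y \<longrightarrow> y = drop 1 z)
     \<and> (\<forall>x. is_edge S k x (drop 1 z) \<longrightarrow> x = take k z))"

definition m_red :: "'a list \<Rightarrow> nat \<Rightarrow> nat" where
  "m_red S k = (\<Sum>z\<in>dbg_edges S k. if fusible S k z then 1 else occ S k z)"

end

theory Submission
  imports Defs
begin


lemma sd_less_iff:
  fixes xs :: "'b::linorder list"
  assumes "sorted xs" "distinct xs" "i < length xs" "j < length xs"
  shows "xs!j < xs!i \<longleftrightarrow> j < i"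
proof
  assume "xs!j < xs!i" then show "j < i"
    using assms by (metis leD linorder_not_le sorted_nth_mono)
next
  assume "j < i" then show "xs!j < xs!i"
    using assms by (metis less_imp_le nat_neq_iff nth_eq_iff_index_eq order_le_neq_trans sorted_nth_mono)
qed

lemma sd_idx:
  fixes xs :: "'b::linorder list"
  assumes "sorted xs" "distinct xs" "i < length xs"
  shows "card {x\<in>set xs. x < xs!i} = i"
proof -
  have "{x\<in>set xs. x < xs!i} = (!) xs ` {0..<i}"
    using assms sd_less_iff[OF assms] by (auto simp: in_set_conv_nth image_iff) (metis less_trans)
  moreover have "inj_on ((!) xs) {0..<i}"
    using assms by (auto simp: inj_on_def nth_eq_iff_index_eq)
  ultimately show ?thesis by (simp add: card_image)
qed

lemma app_less_iff:
  fixes u v :: "'b::linorder list"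
  shows "length u = length v \<Longrightarrow> (u @ [c] < v @ [c]) = (u < v)"
proof (induction u arbitrary: v)
  case Nil then show ?case by simp
next
  case (Cons a u v)
  then obtain b v' where "v = b # v'" "length u = length v'" by (cases v) auto
  then show ?case using Cons by simp
qed

lemma list_eq_take_drop1:
  assumes "length z = Suc k" "length z' = Suc k" "1 \<le> k"
    "take k z = take k z'" "drop 1 z = drop 1 z'"
  shows "z = z'"
proof (rule nth_equalityI)
  show "length z = length z'" using assms by simp
  fix i assume i: "i < length z"
  show "z!i = z'!i"
  proof (cases "i < k")
    case True then show ?thesis using assms(4) by (metis nth_take)
  next
    case False
    then have "i \<ge> 1" using assms by simp
    have "drop 1 z ! (i-1) = drop 1 z' ! (i-1)" using assms(5) by (simp only:)
    moreover have "drop 1 z ! (i-1) = z ! i" "drop 1 z' ! (i-1) = z' ! i"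
      using i assms \<open>i\<ge>1\<close> by (subst nth_drop; simp)+
    ultimately show ?thesis by simp
  qed
qed

locale bwt =
  fixes S :: "'a::linorder list"
  assumes len2: "length S \<ge> 2"
    and dmin: "\<forall>c. last S \<le> c"
    and duniq: "last S \<notin> set (butlast S)"
begin

abbreviation "n \<equiv> length S"
definition "R = rot S ` {0..<n}"

lemma rot_eq: "j < n \<Longrightarrow> rot S j = rotate j S"
  by (simp add: rot_def rotate_drop_take)

lemma S_nth_ne_last: "i < n - 1 \<Longrightarrow> S!i \<noteq> last S"
  using duniq by (metis length_butlast nth_butlast nth_mem)

lemma last_S_nth: "last S = S ! (n - 1)"
proof -
  have "S \<noteq> []" using len2 by auto
  then show ?thesis by (simp add: last_conv_nth)
qed

lemma inj_rot: "inj_on (rot S) {0..<n}"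
proof -
  have *: "rotate j S \<noteq> rotate j' S" if "j < j'" "j' < n" for j j'
  proof
    assume eq: "rotate j S = rotate j' S"
    have m: "n - 1 - j < n" using that by simp
    have "rotate j S ! (n - 1 - j) = S ! ((j + (n - 1 - j)) mod n)" using nth_rotate[OF m] by simp
    also have "(j + (n - 1 - j)) mod n = n - 1" using that by simp
    finally have a: "rotate j S ! (n - 1 - j) = last S" using last_S_nth by simp
    have "rotate j' S ! (n - 1 - j) = S ! ((j' + (n - 1 - j)) mod n)" using nth_rotate[OF m] by simp
    also have "j' + (n - 1 - j) = n + (j' - j - 1)" using that by simp
    also have "(n + (j' - j - 1)) mod n = j' - j - 1"
      using that by (simp only: mod_add_self1) (simp add: mod_less)
    finally have "rotate j' S ! (n - 1 - j) = S ! (j' - j - 1)" .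
    moreover have "S ! (j' - j - 1) \<noteq> last S" using that by (intro S_nth_ne_last) simp
    ultimately show False using a eq by simp
  qed
  show ?thesis
  proof (rule inj_onI)
    fix a b assume ab: "a \<in> {0..<n}" "b \<in> {0..<n}" "rot S a = rot S b"
    then have e: "rotate a S = rotate b S" by (simp add: rot_eq)
    show "a = b"
    proof (rule ccontr)
      assume "a \<noteq> b"
      then consider "a < b" | "b < a" by linarith
      then show False using * e ab by cases (auto, metis)
    qed
  qed
qed

lemma card_R: "card R = n"
  using inj_rot by (simp add: R_def card_image)

lemma finite_R: "finite R" by (simp add: R_def)

lemma R_iff: "x \<in> R \<longleftrightarrow> (\<exists>j<n. x = rotate j S)"
  by (auto simp: R_def rot_eq)

lemma R_len: "x \<in> R \<Longrightarrow> length x = n"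
  by (auto simp: R_iff)

lemma R_rotate1: "x \<in> R \<Longrightarrow> rotate1 x \<in> R"
proof -
  assume "x \<in> R"
  then obtain j where j: "j < n" "x = rotate j S" by (auto simp: R_iff)
  show ?thesis
  proof (cases "Suc j < n")
    case True then show ?thesis using j by (auto simp: R_iff intro!: exI[of _ "Suc j"])
  next
    case False
    then have "Suc j = n" using j by simp
    then have "rotate1 x = rotate n S" using j by (metis rotate_Suc)
    then have "rotate1 x = rotate 0 S" by simp
    then show ?thesis using len2 by (auto simp: R_iff intro!: exI[of _ 0])
  qed
qed

lemma R_pred: "x \<in> R \<Longrightarrow> \<exists>y\<in>R. rotate1 y = x"
proof -
  assume "x \<in> R"
  then obtain j where j: "j < n" "x = rotate j S" by (auto simp: R_iff)
  show ?thesis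
  proof (cases j)
    case 0
    have "Suc (n - 1) = n" using len2 by simp
    then have "rotate1 (rotate (n - 1) S) = rotate n S" by (metis rotate_Suc)
    also have "\<dots> = S" by simp
    finally have "rotate1 (rotate (n - 1) S) = x" using 0 j by simp
    moreover have "rotate (n - 1) S \<in> R" using len2 unfolding R_iff by (intro exI[of _ "n - 1"]) simp
    ultimately show ?thesis by blast
  next
    case (Suc j')
    then show ?thesis using j by (auto simp: R_iff intro!: bexI[of _ "rotate j' S"] exI[of _ j'])
  qed
qed

lemma hd_rot: "j < n \<Longrightarrow> hd (rot S j) = S ! j"
proof -
  assume j: "j < n"
  have "rotate j S \<noteq> []" using len2 by (cases S) auto
  then have "hd (rotate j S) = rotate j S ! 0" by (simp add: hd_conv_nth)
  also have "\<dots> = S ! ((j + 0) mod n)" using len2 by (intro nth_rotate) (cases S; simp)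
  finally show ?thesis using j by (simp add: rot_eq)
qed

definition "B = BWM S"

lemma B_facts: "sorted B" "distinct B" "set B = R" "length B = n"
proof -
  have d: "distinct (map (rot S) [0..<n])" using inj_rot by (simp add: distinct_map)
  show "sorted B" "distinct B" "set B = R" "length B = n"
    using d by (simp_all add: B_def BWM_def R_def)
qed

lemma B_in: "i < n \<Longrightarrow> B ! i \<in> R"
  using B_facts by (metis nth_mem)

lemma B_idx: "i < n \<Longrightarrow> card {x\<in>R. x < B!i} = i"
  using sd_idx[of B i] B_facts by simp

lemma B_idx2: "x \<in> R \<Longrightarrow> card {y\<in>R. y < x} < n \<and> B ! card {y\<in>R. y < x} = x"
proof -
  assume "x \<in> R"
  then obtain i where "i < n" "x = B!i" using B_facts by (metis in_set_conv_nth)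
  then show ?thesis using B_idx by simp
qed

lemma LF_thm:
  assumes i: "i < n"
  shows "LF S i < n \<and> rotate1 (B ! LF S i) = B ! i"
proof -
  define e where "e = B ! i"
  have eR: "e \<in> R" using B_in i e_def by simp
  obtain \<rho> where \<rho>R: "\<rho> \<in> R" and \<rho>e: "rotate1 \<rho> = e" using R_pred[OF eR] by blast
  define c where "c = last e"
  have \<rho>len: "length \<rho> = n" using R_len \<rho>R by simp
  then have \<rho>ne: "\<rho> \<noteq> []" using len2 by auto
  have e_eq: "e = tl \<rho> @ [c]" and c_eq: "c = hd \<rho>"
    using \<rho>e rotate1_hd_tl[OF \<rho>ne] c_def by auto
  have \<rho>_eq: "\<rho> = c # tl \<rho>" using \<rho>ne c_eq by simp
  have BWT_i: "BWT S i = c" by (simp add: BWT_def c_def e_def B_def)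
  define A1 where "A1 = {x\<in>R. hd x < c}"
  define A2 where "A2 = {x\<in>R. hd x = c \<and> x < \<rho>}"
  define A3 where "A3 = {y\<in>R. last y = c \<and> y < e}"
  have xcons: "x = hd x # tl x" if "x \<in> R" for x
    using R_len[OF that] len2 by (cases x) auto
  have less_iff: "x < \<rho> \<longleftrightarrow> hd x < c \<or> hd x = c \<and> tl x < tl \<rho>" if "x \<in> R" for x
  proof -
    have "x < \<rho> \<longleftrightarrow> hd x # tl x < c # tl \<rho>" using xcons[OF that] \<rho>_eq by simp
    then show ?thesis by simp
  qed
  have h1: "{x\<in>R. x < \<rho>} = A1 \<union> A2" unfolding A1_def A2_def using less_iff by auto
  have fin: "finite A1" "finite A2" "finite A3" using finite_R by (auto simp: A1_def A2_def A3_def)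
  have "A1 \<inter> A2 = {}" by (auto simp: A1_def A2_def)
  then have h2: "card {x\<in>R. x < \<rho>} = card A1 + card A2" using h1 fin by (simp add: card_Un_disjoint)
  have A1_img: "A1 = rot S ` {j\<in>{0..<n}. S!j < c}"
    unfolding A1_def R_def using hd_rot by auto
  have "card A1 = card {j\<in>{0..<n}. S!j < c}"
    unfolding A1_img by (rule card_image, rule inj_on_subset[OF inj_rot]) auto
  also have "\<dots> = Ccount S c" unfolding Ccount_def length_filter_conv_card by (rule arg_cong[where f=card]) auto
  finally have cA1: "card A1 = Ccount S c" .
  have tl_len: "length (tl x) = length (tl \<rho>)" if "x \<in> R" for x using R_len[OF that] \<rho>len by simp
  have A23: "rotate1 ` A2 = A3"
  proof
    show "rotate1 ` A2 \<subseteq> A3"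
    proof
      fix y assume "y \<in> rotate1 ` A2"
      then obtain x where x: "x \<in> A2" "y = rotate1 x" by auto
      then have xR: "x \<in> R" and hx: "hd x = c" and xl: "x < \<rho>" by (auto simp: A2_def)
      have yeq: "y = tl x @ [c]" using x(2) hx xcons[OF xR] by (metis list.distinct(1) rotate1_hd_tl)
      have "tl x < tl \<rho>" using less_iff[OF xR] xl hx by simp
      then have "y < e" using yeq e_eq app_less_iff[OF tl_len[OF xR]] by simp
      moreover have "last y = c" using yeq by simp
      ultimately show "y \<in> A3" using R_rotate1[OF xR] x(2) by (simp add: A3_def)
    qed
  next
    show "A3 \<subseteq> rotate1 ` A2"
    proof
      fix y assume y: "y \<in> A3"
      then have yR: "y \<in> R" and ly: "last y = c" and ye: "y < e" by (auto simp: A3_def)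
      obtain x where xR: "x \<in> R" and xy: "rotate1 x = y" using R_pred[OF yR] by blast
      have yeq: "y = tl x @ [hd x]" using xy xcons[OF xR] by (metis list.distinct(1) rotate1_hd_tl)
      then have hx: "hd x = c" using ly by simp
      have "tl x < tl \<rho>" using ye yeq hx e_eq app_less_iff[OF tl_len[OF xR]] by simp
      then have "x < \<rho>" using less_iff[OF xR] hx by simp
      then show "y \<in> rotate1 ` A2" using xR hx xy by (auto simp: A2_def)
    qed
  qed
  have cA2: "card A2 = card A3"
    unfolding A23[symmetric] by (rule card_image[symmetric]) (meson inj_rotate1 inj_on_subset subset_UNIV)
  have "rankL S c i = length (filter (\<lambda>x. x = c) (map (BWT S) [0..<Suc i]))"
    unfolding rankL_def using i by (simp add: take_map)
  also have "\<dots> = card {j. j < Suc i \<and> BWT S j = c}"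
    unfolding length_filter_conv_card by (intro arg_cong[where f=card]) (auto simp del: upt_Suc)
  also have "{j. j < Suc i \<and> BWT S j = c} = {j. j < Suc i \<and> last (B!j) = c}"
    by (simp add: BWT_def B_def)
  also have "card \<dots> = card ((!) B ` {j. j < Suc i \<and> last (B!j) = c})"
    using i B_facts by (intro card_image[symmetric]) (auto simp: inj_on_def nth_eq_iff_index_eq)
  also have "(!) B ` {j. j < Suc i \<and> last (B!j) = c} = insert e A3"
  proof
    show "(!) B ` {j. j < Suc i \<and> last (B!j) = c} \<subseteq> insert e A3"
    proof
      fix y assume "y \<in> (!) B ` {j. j < Suc i \<and> last (B!j) = c}"
      then obtain j where j: "j < Suc i" "last (B!j) = c" "y = B!j" by blast
      then have "j \<le> i" by simp
      show "y \<in> insert e A3"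
      proof (cases "j = i")
        case True then show ?thesis using j e_def by simp
      next
        case False
        then have "B!j < B!i" using sd_less_iff[of B i j] B_facts i j by simp
        then show ?thesis using j B_in[of j] i by (simp add: A3_def e_def)
      qed
    qed
  next
    show "insert e A3 \<subseteq> (!) B ` {j. j < Suc i \<and> last (B!j) = c}"
    proof
      fix y assume y: "y \<in> insert e A3"
      show "y \<in> (!) B ` {j. j < Suc i \<and> last (B!j) = c}"
      proof (cases "y = e")
        case True then show ?thesis using c_def e_def by auto
      next
        case False
        then have yA: "y \<in> A3" using y by simp
        then have yR: "y \<in> set B" and ly: "last y = c" and ye: "y < B!i"
          using B_facts by (auto simp: A3_def e_def)
        obtain j where j: "j < n" "y = B!j" using yR B_facts by (metis in_set_conv_nth)
        then have "j < i" using sd_less_iff[of B i j] B_facts i ye by simp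
        then show ?thesis using j ly by auto
      qed
    qed
  qed
  also have "card (insert e A3) = Suc (card A3)"
    using fin by (simp add: A3_def)
  finally have rk: "rankL S c i = Suc (card A3)" .
  have "LF S i = card {x\<in>R. x < \<rho>}"
    unfolding LF_def BWT_i rk h2 cA1 cA2 by simp
  then show ?thesis using B_idx2[OF \<rho>R] \<rho>e e_def by simp
qed

end


lemma (in bwt) LF_inj: "inj_on (LF S) {0..<n}"
proof (rule inj_onI)
  fix a b assume "a \<in> {0..<n}" "b \<in> {0..<n}" "LF S a = LF S b"
  then have "B ! a = B ! b" using LF_thm[of a] LF_thm[of b] by auto
  then show "a = b" using B_facts \<open>a \<in> {0..<n}\<close> \<open>b \<in> {0..<n}\<close> by (simp add: nth_eq_iff_index_eq)
qed

lemma (in bwt) LF_pow: "inj_on (LF S ^^ t) {0..<n} \<and> (\<forall>i<n. (LF S ^^ t) i < n)"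
proof (induction t)
  case 0 then show ?case by simp
next
  case (Suc t)
  have m: "LF S ` {0..<n} \<subseteq> {0..<n}" using LF_thm by auto
  have "inj_on ((LF S ^^ t) \<circ> LF S) {0..<n}"
    by (rule comp_inj_on[OF LF_inj inj_on_subset[OF conjunct1[OF Suc.IH] m]])
  moreover have "(LF S ^^ Suc t) = (LF S ^^ t) \<circ> LF S" by (rule funpow_Suc_right)
  ultimately show ?case using Suc.IH LF_thm by (simp add: comp_def del: funpow.simps)
qed

locale bwtk = bwt +
  fixes k :: nat
  assumes k1: "1 \<le> k" and kn: "k < n"
begin

lemma Zk_take: "j < n \<Longrightarrow> m \<le> Suc k \<Longrightarrow> take m (drop j (Zk S k)) = take m (rot S j)"
proof -
  assume j: "j < n" and m: "m \<le> Suc k"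
  have "take m (drop j (Zk S k)) = take m (drop j S) @ take (m - (n - j)) (take k S)"
    using j by (simp add: Zk_def)
  also have "take (m - (n - j)) (take k S) = take (m - (n - j)) (take j S)"
  proof -
    have "m - (n - j) \<le> k" "m - (n - j) \<le> j" using j m kn by arith+
    then show ?thesis by (simp add: take_take min_absorb1)
  qed
  finally show ?thesis by (simp add: rot_def)
qed

lemma len_take_R: "x \<in> R \<Longrightarrow> m \<le> n \<Longrightarrow> length (take m x) = m"
  using R_len by simp

lemma occ_eq: "length z = Suc k \<Longrightarrow> occ S k z = card {x\<in>R. take (Suc k) x = z}"
proof -
  assume True: "length z = Suc k"
  have lz: "length (Zk S k) = n + k" using kn by (simp add: Zk_def)
  have "{i. i + length z \<le> length (Zk S k) \<and> take (length z) (drop i (Zk S k)) = z}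
        = {i. i < n \<and> take (Suc k) (rot S i) = z}"
    using True lz Zk_take by auto
  then have "occ S k z = card {i. i < n \<and> take (Suc k) (rot S i) = z}" by (simp add: occ_def)
  also have "\<dots> = card (rot S ` {i. i < n \<and> take (Suc k) (rot S i) = z})"
    by (rule card_image[symmetric], rule inj_on_subset[OF inj_rot]) auto
  also have "rot S ` {i. i < n \<and> take (Suc k) (rot S i) = z} = {x\<in>R. take (Suc k) x = z}"
    by (auto simp: R_def)
  finally show ?thesis .
qed

lemma edges_eq: "dbg_edges S k = (\<lambda>x. take (Suc k) x) ` R"
proof -
  have "z \<in> dbg_edges S k \<longleftrightarrow> z \<in> (\<lambda>x. take (Suc k) x) ` R" for z
  proof -
    have "z \<in> dbg_edges S k \<longleftrightarrow> length z = Suc k \<and> {x\<in>R. take (Suc k) x = z} \<noteq> {}"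
      using finite_R by (auto simp: dbg_edges_def occ_eq Suc_le_eq card_gt_0_iff)
    also have "\<dots> \<longleftrightarrow> z \<in> (\<lambda>x. take (Suc k) x) ` R"
      using R_len kn by auto
    finally show ?thesis .
  qed
  then show ?thesis by blast
qed

lemma nodes_eq: "dbg_nodes S k = (\<lambda>x. take k x) ` R"
proof -
  have "dbg_nodes S k = (\<lambda>j. take k (rot S j)) ` {0..<n}"
  proof
    show "dbg_nodes S k \<subseteq> (\<lambda>j. take k (rot S j)) ` {0..<n}"
      unfolding dbg_nodes_def using Zk_take[of _ k] by auto
    show "(\<lambda>j. take k (rot S j)) ` {0..<n} \<subseteq> dbg_nodes S k"
    proof
      fix x assume "x \<in> (\<lambda>j. take k (rot S j)) ` {0..<n}"
      then obtain j where "j < n" "x = take k (rot S j)" by auto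
      then have "x = take k (drop j (Zk S k))" using Zk_take[of j k] by simp
      then show "x \<in> dbg_nodes S k" unfolding dbg_nodes_def using \<open>j < n\<close> by blast
    qed
  qed
  then show ?thesis by (auto simp: R_def)
qed

lemma tk_rotate1: "x \<in> R \<Longrightarrow> drop 1 (take (Suc k) x) = take k (rotate1 x)"
proof -
  assume xR: "x \<in> R"
  then have "x \<noteq> []" using R_len[OF xR] len2 by auto
  then have "rotate1 x = tl x @ [hd x]" by (rule rotate1_hd_tl)
  moreover have "length (tl x) \<ge> k" using R_len[OF xR] kn by simp
  ultimately show ?thesis by (simp add: drop_take tl_take[symmetric] drop_Suc)
qed

lemma is_edge_R: "x \<in> R \<Longrightarrow> is_edge S k (take k x) (take k (rotate1 x))"
  unfolding is_edge_def edges_eq using tk_rotate1 by (auto intro!: bexI[of _ x] simp: min_def)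

lemma is_edge_imp: "is_edge S k a b \<Longrightarrow> \<exists>x\<in>R. a = take k x \<and> b = take k (rotate1 x)"
  unfolding is_edge_def edges_eq using tk_rotate1 by (auto simp: min_def)

lemma finite_E: "finite (dbg_edges S k)"
  using finite_R by (simp add: edges_eq)

lemma sum_occ: "(\<Sum>z\<in>dbg_edges S k. occ S k z) = n"
proof -
  have "(\<Sum>z\<in>dbg_edges S k. occ S k z) = (\<Sum>z\<in>(\<lambda>x. take (Suc k) x) ` R. \<Sum>x\<in>{x\<in>R. take (Suc k) x = z}. 1)"
  proof (rule sum.cong)
    fix z assume "z \<in> (\<lambda>x. take (Suc k) x) ` R"
    then obtain x where "x \<in> R" "z = take (Suc k) x" by auto
    then have "length z = Suc k" using R_len kn by simp
    then show "occ S k z = (\<Sum>x\<in>{x\<in>R. take (Suc k) x = z}. 1)" by (simp add: occ_eq)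
  qed (simp add: edges_eq)
  also have "\<dots> = (\<Sum>x\<in>R. 1)"
    by (rule sum.image_gen[symmetric]) (rule finite_R)
  finally show ?thesis by (simp add: card_R)
qed

lemma occ_pos: "z \<in> dbg_edges S k \<Longrightarrow> occ S k z \<ge> 1"
  by (simp add: dbg_edges_def)

lemma E_len: "z \<in> dbg_edges S k \<Longrightarrow> length z = Suc k"
  by (simp add: dbg_edges_def)

end


locale bwtp = bwtk +
  fixes p :: "'a list list"
  assumes plen: "length p \<ge> 2" and psub: "set p \<subseteq> dbg_nodes S k"
    and pH: "\<forall>t. t + 1 < length p \<longrightarrow>
           {y. is_edge S k (p ! t) y} = {p ! (t + 1)} \<and>
           {x. is_edge S k x (p ! (t + 1))} = {p ! t}"
begin

definition "X s = {i. i < n \<and> take k (B!i) = p!s}"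
definition "Y s = {x\<in>R. take k x = p!s}"

lemma X_sub: "X s \<subseteq> {0..<n}" by (auto simp: X_def)

lemma fin_X: "finite (X s)" "finite (Y s)"
  using finite_R by (auto simp: X_def Y_def)

lemma X_card: "card (X s) = card (Y s)"
proof -
  have "(!) B ` X s = Y s"
  proof
    show "(!) B ` X s \<subseteq> Y s" using B_in by (auto simp: X_def Y_def)
    show "Y s \<subseteq> (!) B ` X s"
    proof
      fix x assume "x \<in> Y s"
      then have "x \<in> set B" "take k x = p!s" using B_facts by (auto simp: Y_def)
      then obtain i where "i < n" "x = B!i" "take k x = p!s" using B_facts by (metis in_set_conv_nth)
      then show "x \<in> (!) B ` X s" by (auto simp: X_def)
    qed
  qed
  moreover have "inj_on ((!) B) (X s)"
    using B_facts by (auto simp: X_def inj_on_def nth_eq_iff_index_eq)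
  ultimately show ?thesis by (metis card_image)
qed

lemma LF_step:
  assumes "1 \<le> s" "s < length p" "i \<in> X s"
  shows "LF S i \<in> X (s - 1)"
proof -
  have i: "i < n" "take k (B!i) = p!s" using assms by (auto simp: X_def)
  have LF: "LF S i < n" "rotate1 (B ! LF S i) = B ! i" using LF_thm[OF i(1)] by auto
  have "is_edge S k (take k (B ! LF S i)) (p!s)"
    using is_edge_R[OF B_in[OF LF(1)]] LF(2) i(2) by simp
  moreover have "{x. is_edge S k x (p ! (s - 1 + 1))} = {p ! (s - 1)}"
  proof -
    have "s - 1 + 1 < length p" using assms by simp
    then show ?thesis using pH by blast
  qed
  ultimately have "take k (B ! LF S i) = p ! (s - 1)" using assms by (metis (mono_tags) Nat.le_imp_diff_is_add add.commute mem_Collect_eq singletonD)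
  then show ?thesis using LF(1) by (simp add: X_def)
qed

lemma Y_step:
  assumes "s + 1 < length p" "x \<in> Y s"
  shows "rotate1 x \<in> Y (s + 1)"
proof -
  have x: "x \<in> R" "take k x = p!s" using assms by (auto simp: Y_def)
  have "is_edge S k (p!s) (take k (rotate1 x))" using is_edge_R[OF x(1)] x(2) by simp
  moreover have "{y. is_edge S k (p!s) y} = {p!(s+1)}" using pH assms(1) by blast
  ultimately have "take k (rotate1 x) = p!(s+1)" by blast
  then show ?thesis using R_rotate1[OF x(1)] by (simp add: Y_def)
qed

lemma card_step:
  assumes "s + 1 < length p"
  shows "card (X s) = card (X (s + 1))"
proof -
  have "card (X (s + 1)) \<le> card (X s)"
  proof (rule card_inj_on_le[OF _ _ fin_X(1)])
    show "inj_on (LF S) (X (s + 1))" using inj_on_subset[OF LF_inj X_sub] .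
    show "LF S ` X (s + 1) \<subseteq> X s" using LF_step[of "s+1"] assms by auto
  qed
  moreover have "card (Y s) \<le> card (Y (s + 1))"
  proof (rule card_inj_on_le[OF _ _ fin_X(2)])
    show "inj_on rotate1 (Y s)" by (meson inj_rotate1 inj_on_subset subset_UNIV)
    show "rotate1 ` Y s \<subseteq> Y (s + 1)" using Y_step assms by auto
  qed
  ultimately show ?thesis using X_card[of s] X_card[of "s+1"] by linarith
qed

lemma card_const:
  assumes "s < length p"
  shows "card (X s) = card (X (length p - 1))"
proof -
  have "\<forall>s. s + d = length p - 1 \<longrightarrow> card (X s) = card (X (length p - 1))" for d
  proof (induction d)
    case 0 then show ?case by simp
  next
    case (Suc d)
    show ?case
    proof (intro allI impI)
      fix s assume s: "s + Suc d = length p - 1"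
      then have "card (X s) = card (X (s + 1))" using card_step plen by simp
      also have "\<dots> = card (X (length p - 1))" using Suc.IH s by simp
      finally show "card (X s) = card (X (length p - 1))" .
    qed
  qed
  from this[of "length p - 1 - s"] show ?thesis using assms by simp
qed

lemma LF_pow_X:
  assumes "t \<le> length p - 1" "i \<in> X (length p - 1)"
  shows "(LF S ^^ t) i \<in> X (length p - 1 - t)"
  using assms(1)
proof (induction t)
  case 0 then show ?case using assms by simp
next
  case (Suc t)
  have IH: "(LF S ^^ t) i \<in> X (length p - 1 - t)" using Suc.IH Suc.prems by simp
  have a: "1 \<le> length p - 1 - t" "length p - 1 - t < length p" using Suc.prems plen by auto
  have "LF S ((LF S ^^ t) i) \<in> X (length p - 1 - t - 1)" by (rule LF_step[OF a IH])
  moreover have "length p - 1 - t - 1 = length p - 1 - Suc t" by simp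
  ultimately show ?case by simp
qed

lemma edge_ex:
  assumes "1 \<le> s" "s < length p"
  shows "\<exists>z\<in>dbg_edges S k. take k z = p!(s - 1) \<and> drop 1 z = p!s"
proof -
  have "s - 1 + 1 < length p" using assms by simp
  then have "{y. is_edge S k (p ! (s - 1)) y} = {p ! (s - 1 + 1)}" using pH by blast
  then have "is_edge S k (p!(s-1)) (p!s)" using assms by auto
  then show ?thesis by (auto simp: is_edge_def)
qed

lemma occ_z:
  assumes "1 \<le> s" "s < length p" "z \<in> dbg_edges S k" "take k z = p!(s - 1)" "drop 1 z = p!s"
  shows "occ S k z = card (Y s)"
proof -
  have lz: "length z = Suc k" using E_len assms by simp
  have "rotate1 ` {x\<in>R. take (Suc k) x = z} = Y s"
  proof
    show "rotate1 ` {x\<in>R. take (Suc k) x = z} \<subseteq> Y s"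
      using R_rotate1 tk_rotate1 assms by (auto simp: Y_def)
    show "Y s \<subseteq> rotate1 ` {x\<in>R. take (Suc k) x = z}"
    proof
      fix y assume "y \<in> Y s"
      then have yR: "y \<in> R" and ty: "take k y = p!s" by (auto simp: Y_def)
      obtain x where xR: "x \<in> R" and xy: "rotate1 x = y" using R_pred[OF yR] by blast
      have "is_edge S k (take k x) (p!(s - 1 + 1))" using is_edge_R[OF xR] xy ty assms by simp
      moreover have "{x. is_edge S k x (p ! (s - 1 + 1))} = {p ! (s - 1)}"
      proof -
        have "s - 1 + 1 < length p" using assms by simp
        then show ?thesis using pH by blast
      qed
      ultimately have tx: "take k x = p!(s - 1)" by auto
      have "take (Suc k) x = z"
      proof (rule list_eq_take_drop1[OF _ lz k1])
        show "length (take (Suc k) x) = Suc k" using R_len[OF xR] kn by simp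
        show "take k (take (Suc k) x) = take k z" using tx assms by simp
        show "drop 1 (take (Suc k) x) = drop 1 z" using tk_rotate1[OF xR] xy ty assms by simp
      qed
      then show "y \<in> rotate1 ` {x\<in>R. take (Suc k) x = z}" using xR xy by auto
    qed
  qed
  moreover have "inj_on rotate1 {x\<in>R. take (Suc k) x = z}" by (meson inj_rotate1 inj_on_subset subset_UNIV)
  ultimately show ?thesis using occ_eq[OF lz] by (metis card_image)
qed

end




lemma concat_map_if: "concat (map (\<lambda>i. if P i then [f i] else []) xs) = map f (filter P xs)"
  by (induction xs) auto

theorem mainTheorem9:
  fixes S :: "'a::linorder list" and k r :: nat
    and p :: "nat \<Rightarrow> 'a list list" and I J :: "nat \<Rightarrow> nat"
  assumes "length S \<ge> 2"
    and "\<forall>c. last S \<le> c"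
    and "last S \<notin> set (butlast S)"
    and "1 \<le> k" and "k < length S"
    and "\<forall>l<r. length (p l) \<ge> 2 \<and> distinct (p l) \<and> set (p l) \<subseteq> dbg_nodes S k"
    and "\<forall>l<r. \<forall>l'<r. l \<noteq> l' \<longrightarrow> set (p l) \<inter> set (p l') = {}"
    and "\<forall>l<r. \<forall>t. t + 1 < length (p l) \<longrightarrow>
           {y. is_edge S k (p l ! t) y} = {p l ! (t + 1)} \<and>
           {x. is_edge S k x (p l ! (t + 1))} = {p l ! t}"
    and "\<forall>z. fusible S k z \<longrightarrow>
           (\<exists>l<r. \<exists>t. t + 1 < length (p l) \<and> take k z = p l ! t \<and> drop 1 z = p l ! (t + 1))"
    and "\<forall>l<r. {I l..J l} = xint S (last (p l))"
  shows "length [BWT S i. i \<leftarrow> [0..<length S],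
            i \<notin> {(LF S ^^ t) y | l t y. l < r \<and> I l < y \<and> y \<le> J l \<and> t < length (p l) - 1}]
         = m_red S k"
proof -
  interpret bwtk S k using assms(1-5) by unfold_locales auto
  have bk: "bwtk S k" using assms(1-5) by unfold_locales auto
  have path: "bwtp S k (p l)" if "l < r" for l
  proof (rule bwtp.intro[OF bk])
    show "bwtp_axioms S k (p l)" unfolding bwtp_axioms_def using assms(6,8) that by blast
  qed
  define X where "X l s = bwtp.X S k (p l) s" for l s
  define Y where "Y l s = bwtp.Y S k (p l) s" for l s
  have X_eq: "X l s = {i. i < n \<and> take k (B!i) = p l ! s}" if "l < r" for l s
    unfolding X_def bwtp.X_def[OF path[OF that]] by simp
  have last_eq: "last (p l) = p l ! (length (p l) - 1)" if "l < r" for l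
  proof -
    have "p l \<noteq> []" using assms(6) that by fastforce
    then show ?thesis by (simp add: last_conv_nth)
  qed
  have nodelen: "length x = k" if "x \<in> dbg_nodes S k" for x
    using that nodes_eq R_len kn by auto
  have IJ: "{I l..J l} = X l (length (p l) - 1)" if "l < r" for l
  proof -
    have "p l \<noteq> []" using assms(6) that by fastforce
    then have "last (p l) \<in> set (p l)" by simp
    then have "length (last (p l)) = k" using assms(6) that nodelen by blast
    then show ?thesis using assms(10) that last_eq[OF that] by (simp add: xint_def X_eq[OF that] B_def)
  qed
  have cardIJ: "card (X l s) = Suc (J l) - I l" if "l < r" "s < length (p l)" for l s
  proof -
    have "card (X l s) = card (X l (length (p l) - 1))"
      using bwtp.card_const[OF path[OF that(1)] that(2)] by (simp add: X_def)
    also have "\<dots> = Suc (J l) - I l" using IJ[OF that(1)] card_atLeastAtMost[of "I l" "J l"] by simp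
    finally show ?thesis .
  qed
  have Xsub: "X l s \<subseteq> {0..<n}" if "l < r" for l s by (auto simp: X_eq[OF that])
  define Idx where "Idx = (SIGMA l:{..<r}. {1..<length (p l)})"
  have finIdx: "finite Idx" by (simp add: Idx_def)
  define D where "D = {(LF S ^^ t) y | l t y. l < r \<and> I l < y \<and> y \<le> J l \<and> t < length (p l) - 1}"
  define G where "G = (\<lambda>(l,s). (LF S ^^ (length (p l) - 1 - s)) ` {I l<..J l})"
  have D_eq: "D = \<Union> (G ` Idx)"
  proof
    show "D \<subseteq> \<Union> (G ` Idx)"
    proof
      fix x assume "x \<in> D"
      then obtain l t y where lty: "l < r" "I l < y" "y \<le> J l" "t < length (p l) - 1" "x = (LF S ^^ t) y"
        unfolding D_def by blast
      define s where "s = length (p l) - 1 - t"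
      have "(l, s) \<in> Idx" using lty by (auto simp: Idx_def s_def)
      moreover have "x \<in> G (l, s)" using lty by (auto simp: G_def s_def)
      ultimately show "x \<in> \<Union> (G ` Idx)" by blast
    qed
    show "\<Union> (G ` Idx) \<subseteq> D"
    proof
      fix x assume "x \<in> \<Union> (G ` Idx)"
      then obtain l s where ls: "l < r" "1 \<le> s" "s < length (p l)" "x \<in> G (l, s)"
        by (auto simp: Idx_def)
      then obtain y where y: "I l < y" "y \<le> J l" "x = (LF S ^^ (length (p l) - 1 - s)) y"
        by (auto simp: G_def)
      have "length (p l) - 1 - s < length (p l) - 1" using ls by simp
      then show "x \<in> D" unfolding D_def using ls y by blast
    qed
  qed
  have G_sub: "G (l, s) \<subseteq> X l s" if "(l, s) \<in> Idx" for l s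
  proof
    fix x assume "x \<in> G (l, s)"
    then have "x \<in> (LF S ^^ (length (p l) - 1 - s)) ` {I l<..J l}" by (simp add: G_def)
    then obtain y where y: "y \<in> {I l<..J l}" "x = (LF S ^^ (length (p l) - 1 - s)) y"
      by blast
    have ls: "l < r" "1 \<le> s" "s < length (p l)" using that by (auto simp: Idx_def)
    have "y \<in> {I l..J l}" using y(1) by simp
    then have yX: "y \<in> X l (length (p l) - 1)" using IJ[OF ls(1)] by simp
    have tle: "length (p l) - 1 - s \<le> length (p l) - 1" by simp
    have "x \<in> bwtp.X S k (p l) (length (p l) - 1 - (length (p l) - 1 - s))"
      unfolding y(2) by (rule bwtp.LF_pow_X[OF path[OF ls(1)] tle yX[unfolded X_def]])
    moreover have "length (p l) - 1 - (length (p l) - 1 - s) = s" using ls by simp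
    ultimately show "x \<in> X l s" by (simp add: X_def)
  qed
  have X_disj: "X l s \<inter> X l' s' = {}" if "(l, s) \<in> Idx" "(l', s') \<in> Idx" "(l, s) \<noteq> (l', s')" for l s l' s'
  proof (rule ccontr)
    assume "X l s \<inter> X l' s' \<noteq> {}"
    then obtain i where "i \<in> X l s" "i \<in> X l' s'" by blast
    have ls: "l < r" "s < length (p l)" "l' < r" "s' < length (p l')" using that by (auto simp: Idx_def)
    have "take k (B!i) = p l ! s" using \<open>i \<in> X l s\<close> X_eq[OF ls(1), of s] by simp
    moreover have "take k (B!i) = p l' ! s'" using \<open>i \<in> X l' s'\<close> X_eq[OF ls(3), of s'] by simp
    ultimately have eq: "p l ! s = p l' ! s'" by simp
    show False
    proof (cases "l = l'")
      case True
      have "distinct (p l)" using conjunct1[OF conjunct2[OF assms(6)[rule_format, OF ls(1)]]] .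
      moreover have "p l ! s = p l ! s'" using eq True by simp
      ultimately have "s = s'" using ls True by (simp add: nth_eq_iff_index_eq)
      then have "(l, s) = (l', s')" using True by simp
      then show False using that(3) by contradiction
    next
      case False
      then have "set (p l) \<inter> set (p l') = {}" using assms(7)[rule_format, OF ls(1) ls(3)] by blast
      moreover have "p l ! s \<in> set (p l)" "p l' ! s' \<in> set (p l')" using ls by simp_all
      ultimately have "p l ! s \<in> set (p l) \<inter> set (p l')" "set (p l) \<inter> set (p l') = {}" using eq by auto
      then show False by simp
    qed
  qed
  have cardG: "card (G (l, s)) = J l - I l" if "(l, s) \<in> Idx" for l s
  proof -
    have ls: "l < r" using that by (auto simp: Idx_def)
    have "{I l<..J l} \<subseteq> {I l..J l}" by auto
    then have "{I l<..J l} \<subseteq> {0..<n}" using IJ[OF ls] Xsub[OF ls, of "length (p l) - 1"] by blast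
    then have "inj_on (LF S ^^ (length (p l) - 1 - s)) {I l<..J l}"
      using LF_pow inj_on_subset by blast
    then show ?thesis by (simp add: G_def card_image)
  qed
  have finG: "finite (G x)" for x by (auto simp: G_def split: prod.splits)
  have cardD: "card D = (\<Sum>(l,s)\<in>Idx. J l - I l)"
  proof -
    have "card D = (\<Sum>x\<in>Idx. card (G x))"
      unfolding D_eq
    proof (rule card_UN_disjoint[OF finIdx])
      show "\<forall>i\<in>Idx. finite (G i)" using finG by blast
      show "\<forall>i\<in>Idx. \<forall>j\<in>Idx. i \<noteq> j \<longrightarrow> G i \<inter> G j = {}"
      proof (intro ballI impI)
        fix a b assume "a \<in> Idx" "b \<in> Idx" "a \<noteq> b"
        then obtain l s l' s' where "a = (l, s)" "b = (l', s')" by (cases a, cases b) auto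
        then show "G a \<inter> G b = {}" using G_sub X_disj \<open>a \<in> Idx\<close> \<open>b \<in> Idx\<close> \<open>a \<noteq> b\<close> by blast
      qed
    qed
    also have "\<dots> = (\<Sum>(l,s)\<in>Idx. J l - I l)" by (rule sum.cong) (auto simp: cardG)
    finally show ?thesis .
  qed
  have D_sub: "D \<subseteq> {0..<n}"
  proof -
    have "G a \<subseteq> {0..<n}" if "a \<in> Idx" for a
    proof -
      obtain l s where a: "a = (l, s)" by (cases a)
      then have "l < r" using that by (auto simp: Idx_def)
      then show ?thesis using G_sub[of l s] Xsub[of l s] that a by blast
    qed
    then show ?thesis unfolding D_eq by blast
  qed
  have lhs: "length [BWT S i. i \<leftarrow> [0..<length S], i \<notin> D] = n - card D"
  proof -
    have "length [BWT S i. i \<leftarrow> [0..<length S], i \<notin> D] = length (filter (\<lambda>i. i \<notin> D) [0..<n])"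
      by (simp add: concat_map_if)
    also have "\<dots> = card {i. i < n \<and> i \<notin> D}"
      unfolding length_filter_conv_card by (intro arg_cong[where f=card]) auto
    also have "{i. i < n \<and> i \<notin> D} = {0..<n} - D" by auto
    also have "card \<dots> = n - card D" using D_sub by (simp add: card_Diff_subset finite_subset)
    finally show ?thesis .
  qed
  have node_inj: "(l, s) = (l', s')" if "(l, s) \<in> Idx" "(l', s') \<in> Idx" "p l ! s = p l' ! s'" for l s l' s'
  proof -
    have ls: "l < r" "s < length (p l)" "l' < r" "s' < length (p l')" using that by (auto simp: Idx_def)
    show ?thesis
    proof (cases "l = l'")
      case True
      have "distinct (p l)" using conjunct1[OF conjunct2[OF assms(6)[rule_format, OF ls(1)]]] .
      moreover have "p l ! s = p l ! s'" using that(3) True by simp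
      ultimately have "s = s'" using ls True by (simp add: nth_eq_iff_index_eq)
      then show ?thesis using True by simp
    next
      case False
      then have "set (p l) \<inter> set (p l') = {}" using assms(7)[rule_format, OF ls(1) ls(3)] by blast
      moreover have "p l ! s \<in> set (p l)" "p l' ! s' \<in> set (p l')" using ls by simp_all
      ultimately have "p l ! s \<in> set (p l) \<inter> set (p l')" "set (p l) \<inter> set (p l') = {}" using that(3) by auto
      then show ?thesis by simp
    qed
  qed
  define zz where "zz = (\<lambda>(l,s). SOME z. z \<in> dbg_edges S k \<and> take k z = p l ! (s - 1) \<and> drop 1 z = p l ! s)"
  have zz: "zz (l,s) \<in> dbg_edges S k \<and> take k (zz (l,s)) = p l ! (s - 1) \<and> drop 1 (zz (l,s)) = p l ! s"
    if "(l, s) \<in> Idx" for l s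
  proof -
    have ls: "l < r" "1 \<le> s" "s < length (p l)" using that by (auto simp: Idx_def)
    have "\<exists>z. z \<in> dbg_edges S k \<and> take k z = p l ! (s - 1) \<and> drop 1 z = p l ! s"
      using bwtp.edge_ex[OF path[OF ls(1)] ls(2) ls(3)] by blast
    from someI_ex[OF this] show ?thesis by (simp add: zz_def)
  qed
  have occ_zz: "occ S k (zz (l,s)) = Suc (J l) - I l" if "(l, s) \<in> Idx" for l s
  proof -
    have ls: "l < r" "1 \<le> s" "s < length (p l)" using that by (auto simp: Idx_def)
    have "occ S k (zz (l,s)) = card (bwtp.Y S k (p l) s)"
      using bwtp.occ_z[OF path[OF ls(1)] ls(2) ls(3)] zz[OF that] by blast
    also have "\<dots> = card (X l s)" using bwtp.X_card[OF path[OF ls(1)]] by (simp add: X_def)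
    also have "\<dots> = Suc (J l) - I l" using cardIJ ls by simp
    finally show ?thesis .
  qed
  define F where "F = {z\<in>dbg_edges S k. fusible S k z}"
  have F_eq: "F = zz ` Idx"
  proof
    show "F \<subseteq> zz ` Idx"
    proof
      fix z assume "z \<in> F"
      then have zE: "z \<in> dbg_edges S k" and fz: "fusible S k z" by (auto simp: F_def)
      obtain l t where lt: "l < r" "t + 1 < length (p l)" "take k z = p l ! t" "drop 1 z = p l ! (t + 1)"
        using assms(9) fz by blast
      have idx: "(l, t + 1) \<in> Idx" using lt by (auto simp: Idx_def)
      have "z = zz (l, t + 1)"
      proof (rule list_eq_take_drop1[OF E_len[OF zE] E_len k1])
        show "zz (l, t + 1) \<in> dbg_edges S k" using zz[OF idx] by blast
        show "take k z = take k (zz (l, t + 1))" using zz[OF idx] lt by simp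
        show "drop 1 z = drop 1 (zz (l, t + 1))" using zz[OF idx] lt by simp
      qed
      then show "z \<in> zz ` Idx" using idx by blast
    qed
    show "zz ` Idx \<subseteq> F"
    proof
      fix z assume "z \<in> zz ` Idx"
      then obtain l s where idx: "(l, s) \<in> Idx" and z: "z = zz (l, s)" by auto
      have ls: "l < r" "1 \<le> s" "s < length (p l)" using idx by (auto simp: Idx_def)
      have zp: "z \<in> dbg_edges S k" "take k z = p l ! (s - 1)" "drop 1 z = p l ! s" using zz[OF idx] z by auto
      have "s - 1 + 1 < length (p l)" using ls by simp
      then have H: "{y. is_edge S k (p l ! (s - 1)) y} = {p l ! (s - 1 + 1)}"
          "{x. is_edge S k x (p l ! (s - 1 + 1))} = {p l ! (s - 1)}"
        using assms(8)[rule_format, OF ls(1)] by blast+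
      have "s - 1 + 1 = s" using ls by simp
      then have H': "{y. is_edge S k (p l ! (s - 1)) y} = {p l ! s}"
          "{x. is_edge S k x (p l ! s)} = {p l ! (s - 1)}" using H by simp_all
      have "fusible S k z" unfolding fusible_def
      proof (intro conjI allI impI)
        show "z \<in> dbg_edges S k" by (rule zp(1))
        fix y assume "is_edge S k (take k z) y"
        then have "y \<in> {y. is_edge S k (p l ! (s - 1)) y}" using zp by simp
        then have "y \<in> {p l ! s}" unfolding H'(1) .
        then show "y = drop 1 z" using zp by simp
      next
        fix x assume "is_edge S k x (drop 1 z)"
        then have "x \<in> {x. is_edge S k x (p l ! s)}" using zp by simp
        then have "x \<in> {p l ! (s - 1)}" unfolding H'(2) .
        then show "x = take k z" using zp by simp
      qed
      then show "z \<in> F" using zp by (simp add: F_def)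
    qed
  qed
  have inj_zz: "inj_on zz Idx"
  proof (rule inj_onI)
    fix a b assume a: "a \<in> Idx" and b: "b \<in> Idx" and e: "zz a = zz b"
    obtain l s l' s' where ab: "a = (l, s)" "b = (l', s')" by (cases a, cases b) auto
    have "p l ! s = p l' ! s'" using zz[of l s] zz[of l' s'] a b e ab by metis
    then show "a = b" using node_inj a b ab by blast
  qed
  have finF: "finite F" using finite_E by (simp add: F_def)
  have sumF: "(\<Sum>z\<in>F. occ S k z - 1) = (\<Sum>(l,s)\<in>Idx. J l - I l)"
  proof -
    have "(\<Sum>z\<in>F. occ S k z - 1) = (\<Sum>a\<in>Idx. occ S k (zz a) - 1)"
      unfolding F_eq by (rule sum.reindex[OF inj_zz, unfolded comp_def])
    also have "\<dots> = (\<Sum>(l,s)\<in>Idx. J l - I l)"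
    proof (rule sum.cong)
      fix a assume "a \<in> Idx"
      then obtain l s where "a = (l, s)" "(l, s) \<in> Idx" by (cases a) auto
      then show "occ S k (zz a) - 1 = (case a of (l, s) \<Rightarrow> J l - I l)" using occ_zz by simp
    qed simp
    finally show ?thesis .
  qed
  have mF: "m_red S k + (\<Sum>z\<in>F. occ S k z - 1) = n"
  proof -
    have "(\<Sum>z\<in>F. occ S k z - 1) = (\<Sum>z\<in>dbg_edges S k. if fusible S k z then occ S k z - 1 else 0)"
      unfolding F_def by (rule sum.inter_filter[OF finite_E])
    then have "m_red S k + (\<Sum>z\<in>F. occ S k z - 1)
        = (\<Sum>z\<in>dbg_edges S k. (if fusible S k z then 1 else occ S k z) + (if fusible S k z then occ S k z - 1 else 0))"
      by (simp add: m_red_def sum.distrib)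
    also have "\<dots> = (\<Sum>z\<in>dbg_edges S k. occ S k z)"
      by (rule sum.cong) (auto dest: occ_pos)
    also have "\<dots> = n" by (rule sum_occ)
    finally show ?thesis .
  qed
  have "n - card D = m_red S k" using mF sumF cardD by simp
  then show ?thesis using lhs unfolding D_def by simp
qed

end
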